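(* Assume $c_1>c_2>0$ and $\sigma_0\sigma_1\neq0$. Let $\delta>0$ be sufficiently small, and let $\Phi\in B^6_{2\delta}(0)$ with $\phi_2^2+\phi_3^2>0$. Then the following identities hold. - For $i\in\{1,6\}$: $\gamma^i_{23}+\gamma^i_{32}=0$ and $\gamma^i_{45}+\gamma^i_{54}=0$. - For $i=3$: $-c^3_{32}+\gamma^3_{32}=0$ and $\gamma^3_{45}+\gamma^3_{54}=0$. - For $i=4$: $-c^4_{45}+\gamma^4_{45}=0$ and $\gamma^4_{23}+\gamma^4_{32}=0$. In other words, in the decomposed equations for $w^1,w^3,w^4,w^6$ the terms $w^2w^3$ and $w^4w^5$ do not appear. Moreover, there is a constant $C$ such that each of the four quantities $$-c^2_{23}+\gamma^2_{23},\qquad \gamma^2_{45}+\gamma^2_{54},\qquad -c^5_{54}+\gamma^5_{54},\qquad \gamma^5_{23}+\gamma^5_{32}$$ has absolute value at most $C|\lambda_2(\Phi)-\lambda_3(\Phi)|$ on this set. That is, in the equations for $w^2,w^5$ the coefficients of $w^2w^3$ and $w^4w^5$ carry a factor $\lambda_2-\lambda_3$.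
   Context: Set $$a=c_1^2+2\sigma_0\phi_1,\quad b=c_2^2+2\sigma_1\phi_1,\quad c=2\sigma_1\phi_2,\quad d=2\sigma_1\phi_3,\quad \Delta=(a-b)^2+4(c^2+d^2).$$ Eigenvalues: $$\lambda_1=-\lambda_6=\sqrt{\tfrac12(a+b)+\tfrac12\sqrt\Delta},\qquad\lambda_2=-\lambda_5=\sqrt b,\qquad\lambda_3=-\lambda_4=\sqrt{\tfrac12(a+b)-\tfrac12\sqrt\Delta}.$$ Right eigenvectors (column vectors): $$r_1=\big(\tfrac{\lambda_1^2-b}{2\sigma_1},\phi_2,\phi_3,-\tfrac{\lambda_1(\lambda_1^2-b)}{2\sigma_1},-\lambda_1\phi_2,-\lambda_1\phi_3\big),$$ $$r_2=(0,\phi_3,-\phi_2,0,-\lambda_2\phi_3,\lambda_2\phi_2),$$ $$r_3=\big(\tfrac{\lambda_3^2-b}{2\sigma_1},\phi_2,\phi_3,-\tfrac{\lambda_3(\lambda_3^2-b)}{2\sigma_1},-\lambda_3\phi_2,-\lambda_3\phi_3\big),$$ $$r_4=\big(\tfrac{\lambda_3^2-b}{2\sigma_1},\phi_2,\phi_3,\tfrac{\lambda_3(\lambda_3^2-b)}{2\sigma_1},\lambda_3\phi_2,\lambda_3\phi_3\big),$$ $$r_5=(0,\phi_3,-\phi_2,0,\lambda_2\phi_3,-\lambda_2\phi_2),$$ $$r_6=\big(\tfrac{\lambda_1^2-b}{2\sigma_1},\phi_2,\phi_3,\tfrac{\lambda_1(\lambda_1^2-b)}{2\sigma_1},\lambda_1\phi_2,\lambda_1\phi_3\big).$$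 Left eigenvectors (row vectors): $$l^1=\tfrac1K\big(\tfrac{\lambda_1^2-b}{2\sigma_1},\phi_2,\phi_3,-\tfrac{\lambda_1^2-b}{2\sigma_1\lambda_1},-\tfrac{\phi_2}{\lambda_1},-\tfrac{\phi_3}{\lambda_1}\big),$$ $$l^2=\tfrac1M\big(0,\phi_3,-\phi_2,0,-\tfrac{\phi_3}{\lambda_2},\tfrac{\phi_2}{\lambda_2}\big),$$ $$l^3=\tfrac1N\big(\tfrac{\lambda_3^2-b}{2\sigma_1},\phi_2,\phi_3,-\tfrac{\lambda_3^2-b}{2\sigma_1\lambda_3},-\tfrac{\phi_2}{\lambda_3},-\tfrac{\phi_3}{\lambda_3}\big),$$ $$l^4=\tfrac1N\big(\tfrac{\lambda_3^2-b}{2\sigma_1},\phi_2,\phi_3,\tfrac{\lambda_3^2-b}{2\sigma_1\lambda_3},\tfrac{\phi_2}{\lambda_3},\tfrac{\phi_3}{\lambda_3}\big),$$ $$l^5=\tfrac1M\big(0,\phi_3,-\phi_2,0,\tfrac{\phi_3}{\lambda_2},-\tfrac{\phi_2}{\lambda_2}\big),$$ $$l^6=\tfrac1K\big(\tfrac{\lambda_1^2-b}{2\sigma_1},\phi_2,\phi_3,\tfrac{\lambda_1^2-b}{2\sigma_1\lambda_1},\tfrac{\phi_2}{\lambda_1},\tfrac{\phi_3}{\lambda_1}\big),$$ where $$K=\tfrac{\Delta+(a-b)\sqrt\Delta}{4\sigma_1^2},\qquad M=2(\phi_2^2+\phi_3^2),\qquad N=\tfrac{\Delta-(a-b)\sqrt\Delta}{4\sigma_1^2},$$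 so that $l^ir_j=\delta^i_j$. Coefficients: $c^i_{im}=\nabla_\Phi\lambda_i\cdot r_m$. For vector fields $r,s$ on $\mathbb{R}^6$, let $\nabla_\Phi r\cdot s=\sum_j s_j\,\partial_{\phi_j}r$ denote the derivative of $r$ in direction $s$. For $m\neq i$: $$\gamma^i_{im}=-(\lambda_i-\lambda_m)\,l^i\cdot(\nabla_\Phi r_i\cdot r_m-\nabla_\Phi r_m\cdot r_i).$$ For $k\neq i$ and $m\neq i$: $$\gamma^i_{km}=-(\lambda_k-\lambda_m)\,l^i\cdot(\nabla_\Phi r_k\cdot r_m).$$ These are the coefficients of the wave decomposition $w^i=l^i\partial_x\Phi$: $$(\partial_t+\lambda_i\partial_x)w^i=-c^i_{ii}(w^i)^2+\sum_{m\neq i}(-c^i_{im}+\gamma^i_{im})w^mw^i+\sum_{m\ne i,\,k\ne i,\,m\ne k}\gamma^i_{km}w^kw^m.$$ *)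

theory Defs
  imports "HOL-Analysis.Analysis"
begin

definition pa :: "real \<Rightarrow> real \<Rightarrow> real \<Rightarrow> real \<Rightarrow> real^6 \<Rightarrow> real" where
  "pa c1 c2 s0 s1 P = c1^2 + 2* s0*(P$1)"
definition pb :: "real \<Rightarrow> real \<Rightarrow> real \<Rightarrow> real \<Rightarrow> real^6 \<Rightarrow> real" where
  "pb c1 c2 s0 s1 P = c2^2 + 2* s1*(P$1)"
definition pc :: "real \<Rightarrow> real \<Rightarrow> real \<Rightarrow> real \<Rightarrow> real^6 \<Rightarrow> real" where
  "pc c1 c2 s0 s1 P = 2* s1*(P$2)"
definition pd :: "real \<Rightarrow> real \<Rightarrow> real \<Rightarrow> real \<Rightarrow> real^6 \<Rightarrow> real" where
  "pd c1 c2 s0 s1 P = 2* s1*(P$3)"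
definition pDelta :: "real \<Rightarrow> real \<Rightarrow> real \<Rightarrow> real \<Rightarrow> real^6 \<Rightarrow> real" where
  "pDelta c1 c2 s0 s1 P = (pa c1 c2 s0 s1 P - pb c1 c2 s0 s1 P)^2
     + 4*((pc c1 c2 s0 s1 P)^2 + (pd c1 c2 s0 s1 P)^2)"

definition lam :: "real \<Rightarrow> real \<Rightarrow> real \<Rightarrow> real \<Rightarrow> nat \<Rightarrow> real^6 \<Rightarrow> real" where
  "lam c1 c2 s0 s1 i P =
    (let a = pa c1 c2 s0 s1 P; b = pb c1 c2 s0 s1 P; D = pDelta c1 c2 s0 s1 P;
         l1 = sqrt ((a+b)/2 + sqrt D / 2); l2 = sqrt b; l3 = sqrt ((a+b)/2 - sqrt D / 2)
     in if i = 1 then l1 else if i = 2 then l2 else if i = 3 then l3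
        else if i = 4 then - l3 else if i = 5 then - l2 else if i = 6 then - l1 else 0)"

definition rv :: "real \<Rightarrow> real \<Rightarrow> real \<Rightarrow> real \<Rightarrow> nat \<Rightarrow> real^6 \<Rightarrow> real^6" where
  "rv c1 c2 s0 s1 i P =
    (let b = pb c1 c2 s0 s1 P; l1 = lam c1 c2 s0 s1 1 P; l2 = lam c1 c2 s0 s1 2 P;
         l3 = lam c1 c2 s0 s1 3 P; p2 = P$2; p3 = P$3
     in if i = 1 then vector [(l1^2 - b)/(2* s1), p2, p3, - l1*(l1^2 - b)/(2* s1), - l1*p2, - l1*p3]
        else if i = 2 then vector [0, p3, - p2, 0, - l2*p3, l2*p2]
        else if i = 3 then vector [(l3^2 - b)/(2* s1), p2, p3, - l3*(l3^2 - b)/(2* s1), - l3*p2, - l3*p3]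
        else if i = 4 then vector [(l3^2 - b)/(2* s1), p2, p3, l3*(l3^2 - b)/(2* s1), l3*p2, l3*p3]
        else if i = 5 then vector [0, p3, - p2, 0, l2*p3, - l2*p2]
        else if i = 6 then vector [(l1^2 - b)/(2* s1), p2, p3, l1*(l1^2 - b)/(2* s1), l1*p2, l1*p3]
        else 0)"

definition pK :: "real \<Rightarrow> real \<Rightarrow> real \<Rightarrow> real \<Rightarrow> real^6 \<Rightarrow> real" where
  "pK c1 c2 s0 s1 P = (pDelta c1 c2 s0 s1 P + (pa c1 c2 s0 s1 P - pb c1 c2 s0 s1 P) * sqrt (pDelta c1 c2 s0 s1 P)) / (4* s1^2)"
definition pM :: "real^6 \<Rightarrow> real" where
  "pM P = 2*((P$2)^2 + (P$3)^2)"
definition pN :: "real \<Rightarrow> real \<Rightarrow> real \<Rightarrow> real \<Rightarrow> real^6 \<Rightarrow> real" where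
  "pN c1 c2 s0 s1 P = (pDelta c1 c2 s0 s1 P - (pa c1 c2 s0 s1 P - pb c1 c2 s0 s1 P) * sqrt (pDelta c1 c2 s0 s1 P)) / (4* s1^2)"

definition lv :: "real \<Rightarrow> real \<Rightarrow> real \<Rightarrow> real \<Rightarrow> nat \<Rightarrow> real^6 \<Rightarrow> real^6" where
  "lv c1 c2 s0 s1 i P =
    (let b = pb c1 c2 s0 s1 P; l1 = lam c1 c2 s0 s1 1 P; l2 = lam c1 c2 s0 s1 2 P;
         l3 = lam c1 c2 s0 s1 3 P; p2 = P$2; p3 = P$3;
         K = pK c1 c2 s0 s1 P; M = pM P; N = pN c1 c2 s0 s1 P
     in if i = 1 then (1/K) *\<^sub>R vector [(l1^2 - b)/(2* s1), p2, p3, - (l1^2 - b)/(2* s1*l1), - p2/l1, - p3/l1]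
        else if i = 2 then (1/M) *\<^sub>R vector [0, p3, - p2, 0, - p3/l2, p2/l2]
        else if i = 3 then (1/N) *\<^sub>R vector [(l3^2 - b)/(2* s1), p2, p3, - (l3^2 - b)/(2* s1*l3), - p2/l3, - p3/l3]
        else if i = 4 then (1/N) *\<^sub>R vector [(l3^2 - b)/(2* s1), p2, p3, (l3^2 - b)/(2* s1*l3), p2/l3, p3/l3]
        else if i = 5 then (1/M) *\<^sub>R vector [0, p3, - p2, 0, p3/l2, - p2/l2]
        else if i = 6 then (1/K) *\<^sub>R vector [(l1^2 - b)/(2* s1), p2, p3, (l1^2 - b)/(2* s1*l1), p2/l1, p3/l1]
        else 0)"

definition partial_s :: "(real^6 \<Rightarrow> real) \<Rightarrow> real^6 \<Rightarrow> 6 \<Rightarrow> real" where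
  "partial_s f P j = deriv (\<lambda>t. f (P + t *\<^sub>R axis j 1)) 0"
definition partial_v :: "(real^6 \<Rightarrow> real^6) \<Rightarrow> real^6 \<Rightarrow> 6 \<Rightarrow> real^6" where
  "partial_v r P j = (\<chi> k. deriv (\<lambda>t. r (P + t *\<^sub>R axis j 1) $ k) 0)"
definition dir_s :: "(real^6 \<Rightarrow> real) \<Rightarrow> real^6 \<Rightarrow> real^6 \<Rightarrow> real" where
  "dir_s f P s = (\<Sum>j\<in>UNIV. s$j * partial_s f P j)"
definition dir_v :: "(real^6 \<Rightarrow> real^6) \<Rightarrow> real^6 \<Rightarrow> real^6 \<Rightarrow> real^6" where
  "dir_v r P s = (\<Sum>j\<in>UNIV. (s$j) *\<^sub>R partial_v r P j)"

text \<open>c^i_{im} = nabla lambda_i . r_m (written ccoef i m).\<close>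
definition ccoef :: "real \<Rightarrow> real \<Rightarrow> real \<Rightarrow> real \<Rightarrow> nat \<Rightarrow> nat \<Rightarrow> real^6 \<Rightarrow> real" where
  "ccoef c1 c2 s0 s1 i m P = dir_s (lam c1 c2 s0 s1 i) P (rv c1 c2 s0 s1 m P)"

text \<open>gamma^i_{km}: for k = i the formula for gamma^i_{im}; otherwise the formula for k, m \<noteq> i.\<close>
definition gam :: "real \<Rightarrow> real \<Rightarrow> real \<Rightarrow> real \<Rightarrow> nat \<Rightarrow> nat \<Rightarrow> nat \<Rightarrow> real^6 \<Rightarrow> real" where
  "gam c1 c2 s0 s1 i k m P =
    (if k = i then
       - (lam c1 c2 s0 s1 i P - lam c1 c2 s0 s1 m P) *
         (lv c1 c2 s0 s1 i P \<bullet> (dir_v (rv c1 c2 s0 s1 i) P (rv c1 c2 s0 s1 m P)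
                                 - dir_v (rv c1 c2 s0 s1 m) P (rv c1 c2 s0 s1 i P)))
     else
       - (lam c1 c2 s0 s1 k P - lam c1 c2 s0 s1 m P) *
         (lv c1 c2 s0 s1 i P \<bullet> dir_v (rv c1 c2 s0 s1 k) P (rv c1 c2 s0 s1 m P)))"

end

theory Submission imports Defs begin
lemma vec6[simp]:
 "(vector [a,b,c,d,e,f] ::('a::zero)^6)$1 = a"
 "(vector [a,b,c,d,e,f] ::('a::zero)^6)$2 = b"
 "(vector [a,b,c,d,e,f] ::('a::zero)^6)$3 = c"
 "(vector [a,b,c,d,e,f] ::('a::zero)^6)$4 = d"
 "(vector [a,b,c,d,e,f] ::('a::zero)^6)$5 = e"
 "(vector [a,b,c,d,e,f] ::('a::zero)^6)$6 = f"
  unfolding vector_def by simp_all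

lemma exhaust_6:
  fixes x :: 6
  shows "x = 1 \<or> x = 2 \<or> x = 3 \<or> x = 4 \<or> x = 5 \<or> x = 6"
proof (induct x)
  case (of_int z)
  then have "z = 0 \<or> z = 1 \<or> z = 2 \<or> z = 3 \<or> z = 4 \<or> z = 5" by fastforce
  then show ?case by auto
qed

lemma UNIV_6: "UNIV = {1, 2, 3, 4, 5, 6::6}"
  using exhaust_6 by auto

lemma sum_6: "sum f (UNIV::6 set) = f 1 + f 2 + f 3 + f 4 + f 5 + f 6"
  unfolding UNIV_6 by (simp add: ac_simps)


lemma forall_6: "(\<forall>i::6. P i) \<longleftrightarrow> P 1 \<and> P 2 \<and> P 3 \<and> P 4 \<and> P 5 \<and> P 6"
  by (metis exhaust_6)

lemma vec6_diff: "vector [a1,a2,a3,a4,a5,a6] - vector [b1,b2,b3,b4,b5,b6] =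
   (vector [a1-b1,a2-b2,a3-b3,a4-b4,a5-b5,a6-b6] :: real^6)"
  by (simp add: vec_eq_iff forall_6)

lemma vec6_eq_iff: "((vector [a1,a2,a3,a4,a5,a6] :: real^6) = vector [b1,b2,b3,b4,b5,b6]) \<longleftrightarrow>
   a1=b1 \<and> a2=b2 \<and> a3=b3 \<and> a4=b4 \<and> a5=b5 \<and> a6=b6"
  by (auto simp add: vec_eq_iff forall_6)

lemma vec6_inner: "vector [a1,a2,a3,a4,a5,a6] \<bullet> (vector [b1,b2,b3,b4,b5,b6] :: real^6) =
   a1*b1+a2*b2+a3*b3+a4*b4+a5*b5+a6*b6"
  by (simp add: inner_vec_def sum_6)

lemma ax6: "axis (1::6) (1::real) = vector [1,0,0,0,0,0]" "axis (2::6) (1::real) = vector [0,1,0,0,0,0]"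
  "axis (3::6) (1::real) = vector [0,0,1,0,0,0]" "axis (4::6) (1::real) = vector [0,0,0,1,0,0]"
  "axis (5::6) (1::real) = vector [0,0,0,0,1,0]" "axis (6::6) (1::real) = vector [0,0,0,0,0,1]"
  by (simp_all add: vec_eq_iff forall_6 axis_def)

lemma vec6_sum: "(vector [a1,a2,a3,a4,a5,a6] :: real^6) =
   a1 *\<^sub>R axis 1 1 + a2 *\<^sub>R axis 2 1 + a3 *\<^sub>R axis 3 1 + a4 *\<^sub>R axis 4 1 + a5 *\<^sub>R axis 5 1 + a6 *\<^sub>R axis 6 1"
  unfolding ax6 by (simp add: vec_eq_iff forall_6)

lemma vec6_has_derivative:
  assumes "(f1 has_derivative g1) (at P)" "(f2 has_derivative g2) (at P)" "(f3 has_derivative g3) (at P)"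
    "(f4 has_derivative g4) (at P)" "(f5 has_derivative g5) (at P)" "(f6 has_derivative g6) (at P)"
  shows "((\<lambda>Q. vector [f1 Q, f2 Q, f3 Q, f4 Q, f5 Q, f6 Q] :: real^6) has_derivative
     (\<lambda>h. vector [g1 h, g2 h, g3 h, g4 h, g5 h, g6 h])) (at P)"
  unfolding vec6_sum
  by (intro has_derivative_add has_derivative_scaleR_left assms)

lemma dir_v_eq:
  fixes r :: "real^6 \<Rightarrow> real^6"
  assumes "(r has_derivative D) (at P)"
  shows "dir_v r P s = D s"
proof -
  have lin: "linear D" using assms has_derivative_linear by blast
  have pj: "partial_v r P j = D (axis j 1)" for j
  proof -
    have "((\<lambda>t. r (P + t *\<^sub>R axis j 1) $ k) has_derivative (\<lambda>t. (t *\<^sub>R D (axis j 1)) $ k)) (at 0)" for k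
    proof -
      have "((\<lambda>t::real. P + t *\<^sub>R axis j 1) has_derivative (\<lambda>t. t *\<^sub>R axis j 1)) (at 0)"
        by (auto intro!: derivative_eq_intros)
      moreover have "(r has_derivative D) (at (P + 0 *\<^sub>R axis j 1))" using assms by simp
      ultimately have "((\<lambda>t. r (P + t *\<^sub>R axis j 1)) has_derivative (\<lambda>t. D (t *\<^sub>R axis j 1))) (at 0)"
        using diff_chain_at[unfolded o_def] by blast
      then have "((\<lambda>t. r (P + t *\<^sub>R axis j 1)) has_derivative (\<lambda>t. t *\<^sub>R D (axis j 1))) (at 0)"
        using linear_scale[OF lin] by simp
      then show ?thesis
        using bounded_linear.has_derivative[OF bounded_linear_vec_nth] by blast
    qed
    then have "((\<lambda>t. r (P + t *\<^sub>R axis j 1) $ k) has_real_derivative (D (axis j 1) $ k)) (at 0)" for k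
      unfolding has_field_derivative_def by (rule has_derivative_eq_rhs) (auto simp: fun_eq_iff)
    then show ?thesis unfolding partial_v_def
      by (simp add: DERIV_imp_deriv vec_eq_iff)
  qed
  have "dir_v r P s = (\<Sum>j\<in>UNIV. (s$j) *\<^sub>R D (axis j 1))" unfolding dir_v_def pj ..
  also have "\<dots> = D (\<Sum>j\<in>UNIV. (s$j) *\<^sub>R axis j 1)"
    by (simp add: linear_sum[OF lin] linear_scale[OF lin])
  also have "(\<Sum>j\<in>UNIV. (s$j) *\<^sub>R axis j 1) = s"
    using basis_expansion[of s] by (simp add: scalar_mult_eq_scaleR)
  finally show ?thesis .
qed

lemma dir_s_eq:
  fixes f :: "real^6 \<Rightarrow> real"
  assumes "(f has_derivative D) (at P)"
  shows "dir_s f P s = D s"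
proof -
  have lin: "linear D" using assms has_derivative_linear by blast
  have pj: "partial_s f P j = D (axis j 1)" for j
  proof -
    have "((\<lambda>t::real. P + t *\<^sub>R axis j 1) has_derivative (\<lambda>t. t *\<^sub>R axis j 1)) (at 0)"
      by (auto intro!: derivative_eq_intros)
    moreover have "(f has_derivative D) (at (P + 0 *\<^sub>R axis j 1))" using assms by simp
    ultimately have "((\<lambda>t. f (P + t *\<^sub>R axis j 1)) has_derivative (\<lambda>t. D (t *\<^sub>R axis j 1))) (at 0)"
      using diff_chain_at[unfolded o_def] by blast
    then have "((\<lambda>t. f (P + t *\<^sub>R axis j 1)) has_derivative (\<lambda>t. t * D (axis j 1))) (at 0)"
      using linear_scale[OF lin] by simp
    then have "((\<lambda>t. f (P + t *\<^sub>R axis j 1)) has_real_derivative (D (axis j 1))) (at 0)"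
      unfolding has_field_derivative_def by (rule has_derivative_eq_rhs) (auto simp: fun_eq_iff)
    then show ?thesis unfolding partial_s_def
      by (simp add: DERIV_imp_deriv)
  qed
  have "dir_s f P s = (\<Sum>j\<in>UNIV. (s$j) * D (axis j 1))" unfolding dir_s_def pj ..
  also have "\<dots> = D (\<Sum>j\<in>UNIV. (s$j) *\<^sub>R axis j 1)"
    by (simp add: linear_sum[OF lin] linear_scale[OF lin])
  also have "(\<Sum>j\<in>UNIV. (s$j) *\<^sub>R axis j 1) = s"
    using basis_expansion[of s] by (simp add: scalar_mult_eq_scaleR)
  finally show ?thesis .
qed

lemma has_derivative_nth6[derivative_intros]: "((\<lambda>Q::real^6. Q$i) has_derivative (\<lambda>h. h$i)) F"
  by (rule bounded_linear.has_derivative[OF bounded_linear_vec_nth has_derivative_ident])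

context fixes c1 c2 s0 s1 :: real begin

lemma lam2_eq: "lam c1 c2 s0 s1 2 = (\<lambda>Q. sqrt (pb c1 c2 s0 s1 Q))"
  by (simp add: lam_def Let_def fun_eq_iff)
lemma lam3_eq: "lam c1 c2 s0 s1 3 = (\<lambda>Q. sqrt ((pa c1 c2 s0 s1 Q + pb c1 c2 s0 s1 Q)/2 - sqrt (pDelta c1 c2 s0 s1 Q)/2))"
  by (simp add: lam_def Let_def fun_eq_iff)
lemma lam4_eq: "lam c1 c2 s0 s1 4 = (\<lambda>Q. - lam c1 c2 s0 s1 3 Q)"
  by (simp add: lam_def Let_def fun_eq_iff)
lemma lam5_eq: "lam c1 c2 s0 s1 5 = (\<lambda>Q. - lam c1 c2 s0 s1 2 Q)"
  by (simp add: lam_def Let_def fun_eq_iff)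

lemma rv2_eq: "rv c1 c2 s0 s1 2 = (\<lambda>Q. vector [0, Q$3, - Q$2, 0, - lam c1 c2 s0 s1 2 Q * Q$3, lam c1 c2 s0 s1 2 Q * Q$2])"
  by (simp add: rv_def Let_def fun_eq_iff)
lemma rv5_eq: "rv c1 c2 s0 s1 5 = (\<lambda>Q. vector [0, Q$3, - Q$2, 0, lam c1 c2 s0 s1 2 Q * Q$3, - lam c1 c2 s0 s1 2 Q * Q$2])"
  by (simp add: rv_def Let_def fun_eq_iff)
lemma rv3_eq: "rv c1 c2 s0 s1 3 = (\<lambda>Q. vector [(lam c1 c2 s0 s1 3 Q^2 - pb c1 c2 s0 s1 Q)/(2* s1), Q$2, Q$3,
   - lam c1 c2 s0 s1 3 Q * (lam c1 c2 s0 s1 3 Q^2 - pb c1 c2 s0 s1 Q)/(2* s1), - lam c1 c2 s0 s1 3 Q * Q$2, - lam c1 c2 s0 s1 3 Q * Q$3])"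
  by (simp add: rv_def Let_def fun_eq_iff)
lemma rv4_eq: "rv c1 c2 s0 s1 4 = (\<lambda>Q. vector [(lam c1 c2 s0 s1 3 Q^2 - pb c1 c2 s0 s1 Q)/(2* s1), Q$2, Q$3,
   lam c1 c2 s0 s1 3 Q * (lam c1 c2 s0 s1 3 Q^2 - pb c1 c2 s0 s1 Q)/(2* s1), lam c1 c2 s0 s1 3 Q * Q$2, lam c1 c2 s0 s1 3 Q * Q$3])"
  by (simp add: rv_def Let_def fun_eq_iff)

lemma d_pb: "((\<lambda>Q. pb c1 c2 s0 s1 Q) has_derivative (\<lambda>h. 2* s1*h$1)) (at P)"
  unfolding pb_def by (auto intro!: derivative_eq_intros)

lemma d_mu: assumes "pb c1 c2 s0 s1 P > 0"
  shows "(lam c1 c2 s0 s1 2 has_derivative (\<lambda>h. s1*h$1 / lam c1 c2 s0 s1 2 P)) (at P)"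
  unfolding lam2_eq using assms
  by (auto intro!: derivative_eq_intros d_pb simp: field_simps)

lemma d_L3: assumes "pDelta c1 c2 s0 s1 P > 0"
  and "(pa c1 c2 s0 s1 P + pb c1 c2 s0 s1 P)/2 - sqrt (pDelta c1 c2 s0 s1 P)/2 > 0"
  shows "\<exists>dL. (lam c1 c2 s0 s1 3 has_derivative dL) (at P) \<and> (\<forall>h. h$1 = 0 \<and> h$2*P$2 + h$3*P$3 = 0 \<longrightarrow> dL h = 0)"
proof -
  define dD where "dD h = 2*(pa c1 c2 s0 s1 P - pb c1 c2 s0 s1 P)*(2* s0*h$1 - 2* s1*h$1)
      + 4*(2*pc c1 c2 s0 s1 P*(2* s1*h$2) + 2*pd c1 c2 s0 s1 P*(2* s1*h$3))" for h :: "real^6"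
  have D: "((\<lambda>Q. pDelta c1 c2 s0 s1 Q) has_derivative dD) (at P)"
    unfolding pDelta_def pa_def pb_def pc_def pd_def dD_def
    by (auto intro!: derivative_eq_intros simp: fun_eq_iff algebra_simps power2_eq_square)
  have dD0: "dD h = 0" if "h$1 = 0 \<and> h$2*P$2 + h$3*P$3 = 0" for h
  proof -
    have "dD h = 32* s1 * s1*(h$2*P$2 + h$3*P$3)" using conjunct1[OF that]
      unfolding dD_def pc_def pd_def by (simp add: algebra_simps power2_eq_square)
    then show ?thesis using that by (simp add: mult.commute)
  qed
  define dX where "dX h = (2* s0*h$1 + 2* s1*h$1)/2 - dD h * (inverse (sqrt (pDelta c1 c2 s0 s1 P))/2)/2" for h
  have X: "((\<lambda>Q. (pa c1 c2 s0 s1 Q + pb c1 c2 s0 s1 Q)/2 - sqrt (pDelta c1 c2 s0 s1 Q)/2) has_derivative dX) (at P)"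
    unfolding dX_def
    apply (rule derivative_eq_intros)+
    apply (unfold pa_def pb_def)
    apply (auto intro!: derivative_eq_intros D assms(1) simp: fun_eq_iff)
    done
  have L: "(lam c1 c2 s0 s1 3 has_derivative (\<lambda>h. dX h * (inverse (sqrt ((pa c1 c2 s0 s1 P + pb c1 c2 s0 s1 P)/2 - sqrt (pDelta c1 c2 s0 s1 P)/2))/2))) (at P)"
    unfolding lam3_eq
    by (rule has_derivative_real_sqrt[OF _ X]) (use assms(2) in \<open>auto intro!: derivative_eq_intros\<close>)
  show ?thesis
    by (rule exI, rule conjI, rule L) (auto simp: dX_def dD0)
qed

lemma d_r3: fixes P :: "real^6" assumes s1: "s1 \<noteq> 0" and "(L has_derivative dL) (at P)" and "(B has_derivative dB) (at P)"
  shows "((\<lambda>Q. vector [(L Q^2 - B Q)/(2* s1), Q$2, Q$3, - L Q*(L Q^2 - B Q)/(2* s1), - L Q*Q$2, - L Q*Q$3] :: real^6) has_derivative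
 (\<lambda>h. vector[(2*L P*dL h - dB h)/(2* s1), h$2, h$3, -(dL h*(L P^2-B P) + L P*(2*L P*dL h - dB h))/(2* s1),
    -(dL h*P$2 + L P*h$2), -(dL h*P$3 + L P*h$3)])) (at P)"
  by (rule vec6_has_derivative; auto intro!: derivative_eq_intros assms simp: s1 fun_eq_iff field_simps power2_eq_square)

lemma d_r4: fixes P :: "real^6" assumes s1: "s1 \<noteq> 0" and "(L has_derivative dL) (at P)" and "(B has_derivative dB) (at P)"
  shows "((\<lambda>Q. vector [(L Q^2 - B Q)/(2* s1), Q$2, Q$3, L Q*(L Q^2 - B Q)/(2* s1), L Q*Q$2, L Q*Q$3] :: real^6) has_derivative
 (\<lambda>h. vector[(2*L P*dL h - dB h)/(2* s1), h$2, h$3, (dL h*(L P^2-B P) + L P*(2*L P*dL h - dB h))/(2* s1),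
    (dL h*P$2 + L P*h$2), (dL h*P$3 + L P*h$3)])) (at P)"
  by (rule vec6_has_derivative; auto intro!: derivative_eq_intros assms simp: s1 fun_eq_iff field_simps power2_eq_square)

lemma d_r2: fixes P :: "real^6" assumes "(M has_derivative dM) (at P)"
  shows "((\<lambda>Q. vector [0, Q$3, - Q$2, 0, - M Q * Q$3, M Q * Q$2] :: real^6) has_derivative
 (\<lambda>h. vector[0, h$3, - h$2, 0, -(dM h*P$3 + M P*h$3), dM h*P$2 + M P*h$2])) (at P)"
  by (rule vec6_has_derivative; auto intro!: derivative_eq_intros assms simp: fun_eq_iff field_simps power2_eq_square)

lemma d_r5: fixes P :: "real^6" assumes "(M has_derivative dM) (at P)"
  shows "((\<lambda>Q. vector [0, Q$3, - Q$2, 0, M Q * Q$3, - M Q * Q$2] :: real^6) has_derivative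
 (\<lambda>h. vector[0, h$3, - h$2, 0, (dM h*P$3 + M P*h$3), -(dM h*P$2 + M P*h$2)])) (at P)"
  by (rule vec6_has_derivative; auto intro!: derivative_eq_intros assms simp: fun_eq_iff field_simps power2_eq_square)


lemma core:
  fixes P :: "real^6"
  assumes s1: "s1 \<noteq> 0" and bpos: "pb c1 c2 s0 s1 P > 0" and Dpos: "pDelta c1 c2 s0 s1 P > 0"
    and Xpos: "(pa c1 c2 s0 s1 P + pb c1 c2 s0 s1 P)/2 - sqrt (pDelta c1 c2 s0 s1 P)/2 > 0"
  defines "m \<equiv> lam c1 c2 s0 s1 2 P" and "l \<equiv> lam c1 c2 s0 s1 3 P" and "b \<equiv> pb c1 c2 s0 s1 P"
  defines "E \<equiv> (l^2 - b)/(2*m) + m - l"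
  shows "dir_v (rv c1 c2 s0 s1 2) P (rv c1 c2 s0 s1 3 P) - dir_v (rv c1 c2 s0 s1 3) P (rv c1 c2 s0 s1 2 P)
           = vector [0,0,0,0,-(E*P$3),E*P$2]"
    and "dir_v (rv c1 c2 s0 s1 4) P (rv c1 c2 s0 s1 5 P) - dir_v (rv c1 c2 s0 s1 5) P (rv c1 c2 s0 s1 4 P)
           = vector [0,0,0,0,-(E*P$3),E*P$2]"
    and "ccoef c1 c2 s0 s1 3 2 P = 0" and "ccoef c1 c2 s0 s1 4 5 P = 0"
    and "ccoef c1 c2 s0 s1 2 3 P = (l^2 - b)/(2*m)" and "ccoef c1 c2 s0 s1 5 4 P = - ((l^2 - b)/(2*m))"
proof -
  obtain dL where HL: "(lam c1 c2 s0 s1 3 has_derivative dL) (at P)"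
    and dL0: "\<And>h. h$1 = 0 \<and> h$2*P$2 + h$3*P$3 = 0 \<Longrightarrow> dL h = 0"
    using d_L3[OF Dpos Xpos] by blast
  have HM: "(lam c1 c2 s0 s1 2 has_derivative (\<lambda>h. s1*h$1 / m)) (at P)"
    using d_mu[OF bpos] unfolding m_def .
  have R2: "(rv c1 c2 s0 s1 2 has_derivative (\<lambda>h. vector[0, h$3, - h$2, 0, -(s1*h$1 / m*P$3 + m*h$3), s1*h$1 / m*P$2 + m*h$2])) (at P)"
    unfolding rv2_eq using d_r2[OF HM] unfolding m_def .
  have R5: "(rv c1 c2 s0 s1 5 has_derivative (\<lambda>h. vector[0, h$3, - h$2, 0, (s1*h$1 / m*P$3 + m*h$3), -(s1*h$1 / m*P$2 + m*h$2)])) (at P)"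
    unfolding rv5_eq using d_r5[OF HM] unfolding m_def .
  have R3: "(rv c1 c2 s0 s1 3 has_derivative (\<lambda>h. vector[(2*l*dL h - 2 * s1*h$1)/(2 * s1), h$2, h$3, -(dL h*(l^2-b) + l*(2*l*dL h - 2 * s1*h$1))/(2 * s1),
    -(dL h*P$2 + l*h$2), -(dL h*P$3 + l*h$3)])) (at P)"
    unfolding rv3_eq using d_r3[OF s1 HL d_pb] unfolding l_def b_def .
  have R4: "(rv c1 c2 s0 s1 4 has_derivative (\<lambda>h. vector[(2*l*dL h - 2 * s1*h$1)/(2 * s1), h$2, h$3, (dL h*(l^2-b) + l*(2*l*dL h - 2 * s1*h$1))/(2 * s1),
    (dL h*P$2 + l*h$2), (dL h*P$3 + l*h$3)])) (at P)"
    unfolding rv4_eq using d_r4[OF s1 HL d_pb] unfolding l_def b_def .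
  have v2: "rv c1 c2 s0 s1 2 P = vector [0, P$3, - P$2, 0, - m * P$3, m * P$2]"
    by (simp add: rv2_eq m_def)
  have v5: "rv c1 c2 s0 s1 5 P = vector [0, P$3, - P$2, 0, m * P$3, - m * P$2]"
    by (simp add: rv5_eq m_def)
  have v3: "rv c1 c2 s0 s1 3 P = vector [(l^2 - b)/(2 * s1), P$2, P$3, - l * (l^2 - b)/(2 * s1), - l * P$2, - l * P$3]"
    by (simp add: rv3_eq l_def b_def)
  have v4: "rv c1 c2 s0 s1 4 P = vector [(l^2 - b)/(2 * s1), P$2, P$3, l * (l^2 - b)/(2 * s1), l * P$2, l * P$3]"
    by (simp add: rv4_eq l_def b_def)
  have z2: "dL (rv c1 c2 s0 s1 2 P) = 0" by (rule dL0) (simp add: v2 algebra_simps)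
  have z5: "dL (rv c1 c2 s0 s1 5 P) = 0" by (rule dL0) (simp add: v5 algebra_simps)
  have mpos: "m > 0" unfolding m_def lam2_eq using bpos by simp
  show "dir_v (rv c1 c2 s0 s1 2) P (rv c1 c2 s0 s1 3 P) - dir_v (rv c1 c2 s0 s1 3) P (rv c1 c2 s0 s1 2 P)
           = vector [0,0,0,0,-(E*P$3),E*P$2]"
    unfolding dir_v_eq[OF R2] dir_v_eq[OF R3] z2 unfolding v2 v3 E_def
    using s1 mpos by (simp add: vec6_diff vec6_eq_iff field_simps)
  show "dir_v (rv c1 c2 s0 s1 4) P (rv c1 c2 s0 s1 5 P) - dir_v (rv c1 c2 s0 s1 5) P (rv c1 c2 s0 s1 4 P)
           = vector [0,0,0,0,-(E*P$3),E*P$2]"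
    unfolding dir_v_eq[OF R4] dir_v_eq[OF R5] z5 unfolding v5 v4 E_def
    using s1 mpos by (simp add: vec6_diff vec6_eq_iff field_simps)
  show "ccoef c1 c2 s0 s1 3 2 P = 0" unfolding ccoef_def dir_s_eq[OF HL] z2 ..
  show "ccoef c1 c2 s0 s1 4 5 P = 0"
  proof -
    have "(lam c1 c2 s0 s1 4 has_derivative (\<lambda>h. - dL h)) (at P)"
      unfolding lam4_eq by (auto intro!: derivative_eq_intros HL)
    then show ?thesis unfolding ccoef_def using z5 by (simp add: dir_s_eq)
  qed
  show "ccoef c1 c2 s0 s1 2 3 P = (l^2 - b)/(2*m)"
    unfolding ccoef_def dir_s_eq[OF HM] v3 using s1 by simp
  show "ccoef c1 c2 s0 s1 5 4 P = - ((l^2 - b)/(2*m))"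
  proof -
    have "(lam c1 c2 s0 s1 5 has_derivative (\<lambda>h. - (s1*h$1 / m))) (at P)"
      unfolding lam5_eq by (auto intro!: derivative_eq_intros HM)
    then show ?thesis unfolding ccoef_def using s1 by (simp add: dir_s_eq v4)
  qed
qed


lemma lv_W:
  fixes P :: "real^6"
  assumes m: "lam c1 c2 s0 s1 2 P \<noteq> 0" and rho: "(P$2)^2 + (P$3)^2 > 0"
  shows "lv c1 c2 s0 s1 1 P \<bullet> vector [0,0,0,0,-(x*P$3),x*P$2] = 0"
    and "lv c1 c2 s0 s1 3 P \<bullet> vector [0,0,0,0,-(x*P$3),x*P$2] = 0"
    and "lv c1 c2 s0 s1 4 P \<bullet> vector [0,0,0,0,-(x*P$3),x*P$2] = 0"
    and "lv c1 c2 s0 s1 6 P \<bullet> vector [0,0,0,0,-(x*P$3),x*P$2] = 0"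
    and "lv c1 c2 s0 s1 2 P \<bullet> vector [0,0,0,0,-(x*P$3),x*P$2] = x / (2 * lam c1 c2 s0 s1 2 P)"
    and "lv c1 c2 s0 s1 5 P \<bullet> vector [0,0,0,0,-(x*P$3),x*P$2] = - (x / (2 * lam c1 c2 s0 s1 2 P))"
proof -
  have M: "pM P \<noteq> 0" using rho by (simp add: pM_def)
  show "lv c1 c2 s0 s1 1 P \<bullet> vector [0,0,0,0,-(x*P$3),x*P$2] = 0"
    by (simp add: lv_def Let_def vec6_inner algebra_simps)
  show "lv c1 c2 s0 s1 3 P \<bullet> vector [0,0,0,0,-(x*P$3),x*P$2] = 0"
    by (simp add: lv_def Let_def vec6_inner algebra_simps)
  show "lv c1 c2 s0 s1 4 P \<bullet> vector [0,0,0,0,-(x*P$3),x*P$2] = 0"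
    by (simp add: lv_def Let_def vec6_inner algebra_simps)
  show "lv c1 c2 s0 s1 6 P \<bullet> vector [0,0,0,0,-(x*P$3),x*P$2] = 0"
    by (simp add: lv_def Let_def vec6_inner algebra_simps)
  show "lv c1 c2 s0 s1 2 P \<bullet> vector [0,0,0,0,-(x*P$3),x*P$2] = x / (2 * lam c1 c2 s0 s1 2 P)"
    using m M by (simp add: lv_def Let_def vec6_inner field_simps) (simp add: pM_def algebra_simps power2_eq_square)
  show "lv c1 c2 s0 s1 5 P \<bullet> vector [0,0,0,0,-(x*P$3),x*P$2] = - (x / (2 * lam c1 c2 s0 s1 2 P))"
    using m M by (simp add: lv_def Let_def vec6_inner field_simps) (simp add: pM_def algebra_simps power2_eq_square)
qed


lemma pointwise:
  fixes P :: "real^6"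
  assumes s1: "s1 \<noteq> 0" and bpos: "pb c1 c2 s0 s1 P > 0" and Dpos: "pDelta c1 c2 s0 s1 P > 0"
    and Xpos: "(pa c1 c2 s0 s1 P + pb c1 c2 s0 s1 P)/2 - sqrt (pDelta c1 c2 s0 s1 P)/2 > 0"
    and rho: "(P$2)^2 + (P$3)^2 > 0"
  defines "m \<equiv> lam c1 c2 s0 s1 2 P" and "l \<equiv> lam c1 c2 s0 s1 3 P"
  defines "E \<equiv> (l^2 - m^2)/(2*m) + m - l"
  shows "(\<forall>i\<in>{1,6}. gam c1 c2 s0 s1 i 2 3 P + gam c1 c2 s0 s1 i 3 2 P = 0 \<and>
                   gam c1 c2 s0 s1 i 4 5 P + gam c1 c2 s0 s1 i 5 4 P = 0) \<and>
       - ccoef c1 c2 s0 s1 3 2 P + gam c1 c2 s0 s1 3 3 2 P = 0 \<and>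
       gam c1 c2 s0 s1 3 4 5 P + gam c1 c2 s0 s1 3 5 4 P = 0 \<and>
       - ccoef c1 c2 s0 s1 4 5 P + gam c1 c2 s0 s1 4 4 5 P = 0 \<and>
       gam c1 c2 s0 s1 4 2 3 P + gam c1 c2 s0 s1 4 3 2 P = 0"
    and "- ccoef c1 c2 s0 s1 2 3 P + gam c1 c2 s0 s1 2 2 3 P = (m - l) * ((l + m)/(2*m) - E/(2*m))"
    and "gam c1 c2 s0 s1 2 4 5 P + gam c1 c2 s0 s1 2 5 4 P = (m - l) * (- (E/(2*m)))"
    and "- ccoef c1 c2 s0 s1 5 4 P + gam c1 c2 s0 s1 5 5 4 P = (m - l) * (- (l + m)/(2*m) + E/(2*m))"
    and "gam c1 c2 s0 s1 5 2 3 P + gam c1 c2 s0 s1 5 3 2 P = (m - l) * (E/(2*m))"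
proof -
  have mpos: "m > 0" unfolding m_def lam2_eq using bpos by simp
  have bm: "pb c1 c2 s0 s1 P = m^2" unfolding m_def lam2_eq using bpos by simp
  note C = core[OF s1 bpos Dpos Xpos, folded m_def l_def, unfolded bm, folded E_def]
  note W = lv_W[OF _ rho, of x for x, folded m_def, OF mpos[THEN less_imp_neq, symmetric]]
  have l2: "lam c1 c2 s0 s1 2 P = m" and l3: "lam c1 c2 s0 s1 3 P = l"
    and l4: "lam c1 c2 s0 s1 4 P = - l" and l5: "lam c1 c2 s0 s1 5 P = - m"
    by (simp_all add: m_def l_def lam4_eq lam5_eq)
  let ?D = "\<lambda>k j. dir_v (rv c1 c2 s0 s1 k) P (rv c1 c2 s0 s1 j P)"
  have g23: "gam c1 c2 s0 s1 i 2 3 P + gam c1 c2 s0 s1 i 3 2 P = -(m - l) * (lv c1 c2 s0 s1 i P \<bullet> (?D 2 3 - ?D 3 2))"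
    if "i \<noteq> 2" "i \<noteq> 3" for i
    using that by (simp add: gam_def l2 l3 inner_diff_right algebra_simps)
  have g45: "gam c1 c2 s0 s1 i 4 5 P + gam c1 c2 s0 s1 i 5 4 P = -(m - l) * (lv c1 c2 s0 s1 i P \<bullet> (?D 4 5 - ?D 5 4))"
    if "i \<noteq> 4" "i \<noteq> 5" for i
    using that by (simp add: gam_def l4 l5 inner_diff_right algebra_simps)
  have g332: "gam c1 c2 s0 s1 3 3 2 P = (l - m) * (lv c1 c2 s0 s1 3 P \<bullet> (?D 2 3 - ?D 3 2))"
    by (simp add: gam_def l2 l3 inner_diff_right algebra_simps)
  have g223: "gam c1 c2 s0 s1 2 2 3 P = -(m - l) * (lv c1 c2 s0 s1 2 P \<bullet> (?D 2 3 - ?D 3 2))"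
    by (simp add: gam_def l2 l3 inner_diff_right algebra_simps)
  have g445: "gam c1 c2 s0 s1 4 4 5 P = -(m - l) * (lv c1 c2 s0 s1 4 P \<bullet> (?D 4 5 - ?D 5 4))"
    by (simp add: gam_def l4 l5 inner_diff_right algebra_simps)
  have g554: "gam c1 c2 s0 s1 5 5 4 P = (l - m) * (lv c1 c2 s0 s1 5 P \<bullet> (?D 4 5 - ?D 5 4))"
    by (simp add: gam_def l4 l5 inner_diff_right algebra_simps)
  have f1: "gam c1 c2 s0 s1 1 2 3 P + gam c1 c2 s0 s1 1 3 2 P = 0" by (simp only: g23) (simp add: C W W(1)[unfolded One_nat_def])
  have f2: "gam c1 c2 s0 s1 1 4 5 P + gam c1 c2 s0 s1 1 5 4 P = 0" by (simp only: g45) (simp add: C W W(1)[unfolded One_nat_def])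
  have f3: "gam c1 c2 s0 s1 6 2 3 P + gam c1 c2 s0 s1 6 3 2 P = 0" by (simp only: g23) (simp add: C W)
  have f4: "gam c1 c2 s0 s1 6 4 5 P + gam c1 c2 s0 s1 6 5 4 P = 0" by (simp only: g45) (simp add: C W)
  have f5: "- ccoef c1 c2 s0 s1 3 2 P + gam c1 c2 s0 s1 3 3 2 P = 0" by (simp add: g332 C W)
  have f6: "gam c1 c2 s0 s1 3 4 5 P + gam c1 c2 s0 s1 3 5 4 P = 0" by (simp only: g45) (simp add: C W)
  have f7: "- ccoef c1 c2 s0 s1 4 5 P + gam c1 c2 s0 s1 4 4 5 P = 0" by (simp add: g445 C W)
  have f8: "gam c1 c2 s0 s1 4 2 3 P + gam c1 c2 s0 s1 4 3 2 P = 0" by (simp only: g23) (simp add: C W)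
  show "(\<forall>i\<in>{1,6}. gam c1 c2 s0 s1 i 2 3 P + gam c1 c2 s0 s1 i 3 2 P = 0 \<and>
                   gam c1 c2 s0 s1 i 4 5 P + gam c1 c2 s0 s1 i 5 4 P = 0) \<and>
       - ccoef c1 c2 s0 s1 3 2 P + gam c1 c2 s0 s1 3 3 2 P = 0 \<and>
       gam c1 c2 s0 s1 3 4 5 P + gam c1 c2 s0 s1 3 5 4 P = 0 \<and>
       - ccoef c1 c2 s0 s1 4 5 P + gam c1 c2 s0 s1 4 4 5 P = 0 \<and>
       gam c1 c2 s0 s1 4 2 3 P + gam c1 c2 s0 s1 4 3 2 P = 0"
    unfolding Ball_def insert_iff empty_iff using f1 f2 f3 f4 f5 f6 f7 f8 by blast
  show "- ccoef c1 c2 s0 s1 2 3 P + gam c1 c2 s0 s1 2 2 3 P = (m - l) * ((l + m)/(2*m) - E/(2*m))"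
    using mpos by (simp add: g223 C W field_simps power2_eq_square)
  show "gam c1 c2 s0 s1 2 4 5 P + gam c1 c2 s0 s1 2 5 4 P = (m - l) * (- (E/(2*m)))"
    using mpos by (simp add: g45 C W) (simp add: field_simps)
  show "- ccoef c1 c2 s0 s1 5 4 P + gam c1 c2 s0 s1 5 5 4 P = (m - l) * (- (l + m)/(2*m) + E/(2*m))"
    using mpos by (simp add: g554 C W field_simps power2_eq_square)
  show "gam c1 c2 s0 s1 5 2 3 P + gam c1 c2 s0 s1 5 3 2 P = (m - l) * (E/(2*m))"
    using mpos by (simp add: g23 C W) (simp add: field_simps)
qed


lemma abs_mult_le_eps: "\<bar>x\<bar> < e \<Longrightarrow> \<bar>s * x\<bar> \<le> \<bar>s\<bar> * (e::real)"
  by (simp add: abs_mult mult_left_mono)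

lemma region:
  fixes P :: "real^6"
  assumes c: "c1 > c2" "c2 > 0" and s0: "s0 \<noteq> 0" and s1: "s1 \<noteq> 0"
    and e1: "\<bar>s0\<bar> * e \<le> c1^2/4" and e2: "\<bar>s1\<bar> * e \<le> c2^2/4" and e3: "\<bar>s1\<bar> * e \<le> c1*c2/6"
    and p1: "\<bar>P$1\<bar> < e" and p2: "\<bar>P$2\<bar> < e" and p3: "\<bar>P$3\<bar> < e"
    and rho: "(P$2)^2 + (P$3)^2 > 0"
  shows "pb c1 c2 s0 s1 P > 0" "pDelta c1 c2 s0 s1 P > 0"
    "(pa c1 c2 s0 s1 P + pb c1 c2 s0 s1 P)/2 - sqrt (pDelta c1 c2 s0 s1 P)/2 > 0"
    "c2/2 \<le> lam c1 c2 s0 s1 2 P" "lam c1 c2 s0 s1 2 P \<le> 2*c1"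
    "0 \<le> lam c1 c2 s0 s1 3 P" "lam c1 c2 s0 s1 3 P \<le> 2*c1"
proof -
  define a where "a = pa c1 c2 s0 s1 P"
  define b where "b = pb c1 c2 s0 s1 P"
  define D where "D = pDelta c1 c2 s0 s1 P"
  have q1: "\<bar>s1 * P$1\<bar> \<le> c2^2/4" using abs_mult_le_eps[OF p1, of s1] e2 by linarith
  have q0: "\<bar>s0 * P$1\<bar> \<le> c1^2/4" using abs_mult_le_eps[OF p1, of s0] e1 by linarith
  have bq: "b = c2^2 + 2*(s1 * P$1)" unfolding b_def pb_def by simp
  have aq: "a = c1^2 + 2*(s0 * P$1)" unfolding a_def pa_def by simp
  have blo: "b \<ge> c2^2/2" and bhi: "b \<le> 3*c2^2/2" using q1 unfolding bq abs_le_iff by linarith+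
  have alo: "a \<ge> c1^2/2" and ahi: "a \<le> 3*c1^2/2" using q0 unfolding aq abs_le_iff by linarith+
  have c12: "c2^2 < c1^2" using c by (simp add: power_strict_mono)
  have r2: "\<bar>s1 * P$2\<bar> \<le> c1*c2/6" using abs_mult_le_eps[OF p2, of s1] e3 by linarith
  have r3: "\<bar>s1 * P$3\<bar> \<le> c1*c2/6" using abs_mult_le_eps[OF p3, of s1] e3 by linarith
  have r2': "(s1 * P$2)^2 \<le> (c1*c2/6)^2" using power_mono[OF r2 abs_ge_zero, of 2]
    by (simp only: power2_abs)
  have r3': "(s1 * P$3)^2 \<le> (c1*c2/6)^2" using power_mono[OF r3 abs_ge_zero, of 2]
    by (simp only: power2_abs)
  have Deq: "D = (a - b)^2 + 16 * ((s1 * P$2)^2 + (s1 * P$3)^2)"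
    unfolding D_def a_def b_def pDelta_def pc_def pd_def by (simp add: power_mult_distrib)
  have pos23: "(s1 * P$2)^2 + (s1 * P$3)^2 > 0"
  proof -
    have "(s1*P$2)^2 + (s1*P$3)^2 = s1^2 * ((P$2)^2 + (P$3)^2)" by (simp add: power_mult_distrib algebra_simps)
    then show ?thesis using rho s1 by simp
  qed
  have c2p: "c2^2 > 0" using c by simp
  show "pb c1 c2 s0 s1 P > 0" using blo c2p unfolding b_def by linarith
  show Dp: "pDelta c1 c2 s0 s1 P > 0" using Deq pos23 unfolding D_def
    by (smt (verit) zero_le_power2)
  have ab: "a * b \<ge> (c1^2/2) * (c2^2/2)"
    using alo blo c zero_le_power2[of c1] zero_le_power2[of c2] by (intro mult_mono) linarith+
  have lin: "16 * (x + y) \<le> 32 * z" if "x \<le> z" "y \<le> z" for x y z :: real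
    using that by (smt (verit))
  have "16 * ((s1 * P$2)^2 + (s1 * P$3)^2) \<le> 32 * (c1*c2/6)^2" by (rule lin[OF r2' r3'])
  also have "\<dots> < 4 * ((c1^2/2) * (c2^2/2))" using c by (simp add: power_mult_distrib power_divide)
  finally have "D < (a + b)^2" using Deq ab by (simp add: power2_eq_square algebra_simps)
  then have "sqrt D < sqrt ((a+b)^2)" by (rule real_sqrt_less_mono)
  also have "\<dots> = a + b" using alo blo zero_le_power2[of c1] zero_le_power2[of c2]
    by (subst real_sqrt_abs) linarith
  finally have X: "(a + b)/2 - sqrt D/2 > 0" by simp
  then show "(pa c1 c2 s0 s1 P + pb c1 c2 s0 s1 P)/2 - sqrt (pDelta c1 c2 s0 s1 P)/2 > 0"
    unfolding a_def b_def D_def .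
  have bpos: "b > 0" using blo c2p by linarith
  have m2: "(lam c1 c2 s0 s1 2 P)^2 = b" and m0: "lam c1 c2 s0 s1 2 P \<ge> 0"
    unfolding lam2_eq b_def using bpos[unfolded b_def] by auto
  show "c2/2 \<le> lam c1 c2 s0 s1 2 P"
    by (rule power2_le_imp_le) (use m2 blo m0 zero_le_power2[of "lam c1 c2 s0 s1 2 P"] in \<open>auto simp: power_divide\<close>)
  show "lam c1 c2 s0 s1 2 P \<le> 2*c1"
  proof (rule power2_le_imp_le)
    have "(2*c1)^2 = 4*c1^2" by (simp add: power_mult_distrib)
    then show "(lam c1 c2 s0 s1 2 P)^2 \<le> (2*c1)^2" using m2 bhi c12 zero_le_power2[of c1] by linarith
  qed (use c in auto)
  have l2: "(lam c1 c2 s0 s1 3 P)^2 = (a + b)/2 - sqrt D/2" and l0: "lam c1 c2 s0 s1 3 P \<ge> 0"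
    unfolding lam3_eq a_def b_def D_def using X[unfolded a_def b_def D_def] by auto
  show "0 \<le> lam c1 c2 s0 s1 3 P" by (rule l0)
  show "lam c1 c2 s0 s1 3 P \<le> 2*c1"
  proof (rule power2_le_imp_le)
    have "(2*c1)^2 = 4*c1^2" by (simp add: power_mult_distrib)
    then show "(lam c1 c2 s0 s1 3 P)^2 \<le> (2*c1)^2" using l2 ahi bhi c12 zero_le_power2[of c1] real_sqrt_ge_zero[OF less_imp_le[OF Dp[folded D_def]]]
      unfolding add_divide_distrib diff_divide_distrib by linarith
  qed (use c in auto)
qed

end

lemma div_bound: fixes X K m c :: real
  assumes "\<bar>X\<bar> \<le> K" "c \<le> 2*m" "0 < c" shows "\<bar>X/(2*m)\<bar> \<le> K/c"
proof -
  have mp: "2*m > 0" using assms by linarith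
  have K0: "K \<ge> 0" using assms(1) by linarith
  have "\<bar>X/(2*m)\<bar> = \<bar>X\<bar>/(2*m)" using mp by (simp add: abs_divide)
  also have "\<dots> \<le> K/(2*m)" using assms(1) mp by (simp add: divide_right_mono)
  also have "\<dots> \<le> K/c" using K0 assms(2,3) by (simp add: frac_le)
  finally show ?thesis .
qed

lemma Gbound:
  fixes m l c1 c2 :: real
  assumes hm: "c2/2 \<le> m" "m \<le> 2*c1" and hl: "0 \<le> l" "l \<le> 2*c1" and c2: "c2 > 0"
  defines "E \<equiv> (l^2 - m^2)/(2*m) + m - l"
  defines "C \<equiv> (8*c1 + 8*c1^2/c2)/c2"
  shows "\<bar>(l + m)/(2*m) - E/(2*m)\<bar> \<le> C" "\<bar>- (E/(2*m))\<bar> \<le> C"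
    "\<bar>- (l + m)/(2*m) + E/(2*m)\<bar> \<le> C" "\<bar>E/(2*m)\<bar> \<le> C"
proof -
  have m0: "0 \<le> m" using hm c2 by linarith
  have c1: "0 \<le> c1" using hl by linarith
  have "l^2 \<le> (2*c1)^2" using hl by (intro power_mono) auto
  moreover have "m^2 \<le> (2*c1)^2" using hm m0 by (intro power_mono) auto
  moreover have "(2*c1)^2 = 4*c1^2" by (simp add: power_mult_distrib)
  ultimately have "\<bar>l^2 - m^2\<bar> \<le> 8*c1^2" by (smt (verit) zero_le_power2)
  then have "\<bar>(l^2 - m^2)/(2*m)\<bar> \<le> 8*c1^2/c2" using hm c2 by (intro div_bound) auto
  then have hE: "\<bar>E\<bar> \<le> 8*c1^2/c2 + 4*c1" unfolding E_def using hm hl m0 by linarith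
  have K: "\<bar>X\<bar> \<le> 8*c1 + 8*c1^2/c2 \<Longrightarrow> \<bar>X/(2*m)\<bar> \<le> C" for X
    unfolding C_def using hm c2 by (intro div_bound) auto
  have lm: "\<bar>l + m\<bar> \<le> 4*c1" using hm hl m0 by linarith
  have "(l + m)/(2*m) - E/(2*m) = (l + m - E)/(2*m)" by (simp add: diff_divide_distrib)
  also have "\<bar>\<dots>\<bar> \<le> C" by (rule K) (use hE lm in linarith)
  finally show "\<bar>(l + m)/(2*m) - E/(2*m)\<bar> \<le> C" .
  have "- (E/(2*m)) = (- E)/(2*m)" by simp
  also have "\<bar>\<dots>\<bar> \<le> C" by (rule K) (use hE c1 c2 in \<open>auto intro: add_increasing\<close>)
  finally show "\<bar>- (E/(2*m))\<bar> \<le> C" .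
  have "- (l + m)/(2*m) + E/(2*m) = (E - (l + m))/(2*m)" by (simp add: add_divide_distrib diff_divide_distrib)
  also have "\<bar>\<dots>\<bar> \<le> C" by (rule K) (use hE lm in linarith)
  finally show "\<bar>- (l + m)/(2*m) + E/(2*m)\<bar> \<le> C" .
  show "\<bar>E/(2*m)\<bar> \<le> C" by (rule K) (use hE c1 c2 in \<open>auto intro: add_increasing\<close>)
qed

theorem proposition3p2:
  fixes c1 c2 s0 s1 :: real
  assumes "c1 > c2" and "c2 > 0" and "s0 * s1 \<noteq> 0"
  shows "\<exists>\<delta>0>0. \<forall>\<delta>. 0 < \<delta> \<and> \<delta> < \<delta>0 \<longrightarrow>
    (\<forall>P::real^6. P \<in> ball 0 (2*\<delta>) \<and> (P$2)^2 + (P$3)^2 > 0 \<longrightarrow>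
       (\<forall>i\<in>{1,6}. gam c1 c2 s0 s1 i 2 3 P + gam c1 c2 s0 s1 i 3 2 P = 0 \<and>
                   gam c1 c2 s0 s1 i 4 5 P + gam c1 c2 s0 s1 i 5 4 P = 0) \<and>
       - ccoef c1 c2 s0 s1 3 2 P + gam c1 c2 s0 s1 3 3 2 P = 0 \<and>
       gam c1 c2 s0 s1 3 4 5 P + gam c1 c2 s0 s1 3 5 4 P = 0 \<and>
       - ccoef c1 c2 s0 s1 4 5 P + gam c1 c2 s0 s1 4 4 5 P = 0 \<and>
       gam c1 c2 s0 s1 4 2 3 P + gam c1 c2 s0 s1 4 3 2 P = 0) \<and>
    (\<exists>C. \<forall>P::real^6. P \<in> ball 0 (2*\<delta>) \<and> (P$2)^2 + (P$3)^2 > 0 \<longrightarrow>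
       (let d23 = \<bar>lam c1 c2 s0 s1 2 P - lam c1 c2 s0 s1 3 P\<bar> in
        \<bar>- ccoef c1 c2 s0 s1 2 3 P + gam c1 c2 s0 s1 2 2 3 P\<bar> \<le> C * d23 \<and>
        \<bar>gam c1 c2 s0 s1 2 4 5 P + gam c1 c2 s0 s1 2 5 4 P\<bar> \<le> C * d23 \<and>
        \<bar>- ccoef c1 c2 s0 s1 5 4 P + gam c1 c2 s0 s1 5 5 4 P\<bar> \<le> C * d23 \<and>
        \<bar>gam c1 c2 s0 s1 5 2 3 P + gam c1 c2 s0 s1 5 3 2 P\<bar> \<le> C * d23))"
proof -
  have s0: "s0 \<noteq> 0" and s1: "s1 \<noteq> 0" using assms(3) by auto
  have c1p: "c1 > 0" using assms(1,2) by linarith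
  define e where "e = min (c2^2/(4*\<bar>s1\<bar>)) (min (c1^2/(4*\<bar>s0\<bar>)) (c1*c2/(6*\<bar>s1\<bar>)))"
  have as0: "\<bar>s0\<bar> > 0" and as1: "\<bar>s1\<bar> > 0" using s0 s1 by auto
  have epos: "e > 0" unfolding e_def using as0 as1 assms(2) c1p by simp
  have e1: "\<bar>s0\<bar> * e \<le> c1^2/4"
  proof -
    have "e \<le> c1^2/(4*\<bar>s0\<bar>)" unfolding e_def by linarith
    then show ?thesis using as0 by (simp add: le_divide_eq field_simps)
  qed
  have e2: "\<bar>s1\<bar> * e \<le> c2^2/4"
  proof -
    have "e \<le> c2^2/(4*\<bar>s1\<bar>)" unfolding e_def by linarith
    then show ?thesis using as1 by (simp add: le_divide_eq field_simps)
  qed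
  have e3: "\<bar>s1\<bar> * e \<le> c1*c2/6"
  proof -
    have "e \<le> c1*c2/(6*\<bar>s1\<bar>)" unfolding e_def by linarith
    then show ?thesis using as1 by (simp add: le_divide_eq field_simps)
  qed
  define C where "C = (8*c1 + 8*c1^2/c2)/c2"
  have reg: "\<bar>P$1\<bar> < e \<and> \<bar>P$2\<bar> < e \<and> \<bar>P$3\<bar> < e"
    if "P \<in> ball 0 (2*\<delta>)" "\<delta> < e/2" for P :: "real^6" and \<delta>
  proof -
    have "norm P < e" using that by (simp add: dist_norm)
    then show ?thesis using component_le_norm_cart[of P] by (meson le_less_trans)
  qed
  show ?thesis
  proof (rule exI[of _ "e/2"], rule conjI)
    show "e/2 > 0" using epos by simp
  next
   show "\<forall>\<delta>. 0 < \<delta> \<and> \<delta> < e/2 \<longrightarrow> (\<forall>P::real^6. P \<in> ball 0 (2*\<delta>) \<and> (P$2)^2 + (P$3)^2 > 0 \<longrightarrow>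
       (\<forall>i\<in>{1,6}. gam c1 c2 s0 s1 i 2 3 P + gam c1 c2 s0 s1 i 3 2 P = 0 \<and>
                   gam c1 c2 s0 s1 i 4 5 P + gam c1 c2 s0 s1 i 5 4 P = 0) \<and>
       - ccoef c1 c2 s0 s1 3 2 P + gam c1 c2 s0 s1 3 3 2 P = 0 \<and>
       gam c1 c2 s0 s1 3 4 5 P + gam c1 c2 s0 s1 3 5 4 P = 0 \<and>
       - ccoef c1 c2 s0 s1 4 5 P + gam c1 c2 s0 s1 4 4 5 P = 0 \<and>
       gam c1 c2 s0 s1 4 2 3 P + gam c1 c2 s0 s1 4 3 2 P = 0) \<and>
    (\<exists>C. \<forall>P::real^6. P \<in> ball 0 (2*\<delta>) \<and> (P$2)^2 + (P$3)^2 > 0 \<longrightarrow>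
       (let d23 = \<bar>lam c1 c2 s0 s1 2 P - lam c1 c2 s0 s1 3 P\<bar> in
        \<bar>- ccoef c1 c2 s0 s1 2 3 P + gam c1 c2 s0 s1 2 2 3 P\<bar> \<le> C * d23 \<and>
        \<bar>gam c1 c2 s0 s1 2 4 5 P + gam c1 c2 s0 s1 2 5 4 P\<bar> \<le> C * d23 \<and>
        \<bar>- ccoef c1 c2 s0 s1 5 4 P + gam c1 c2 s0 s1 5 5 4 P\<bar> \<le> C * d23 \<and>
        \<bar>gam c1 c2 s0 s1 5 2 3 P + gam c1 c2 s0 s1 5 3 2 P\<bar> \<le> C * d23))"
   proof (intro allI impI)
    fix \<delta> :: real assume d: "0 < \<delta> \<and> \<delta> < e/2"
    show "(\<forall>P::real^6. P \<in> ball 0 (2*\<delta>) \<and> (P$2)^2 + (P$3)^2 > 0 \<longrightarrow>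
       (\<forall>i\<in>{1,6}. gam c1 c2 s0 s1 i 2 3 P + gam c1 c2 s0 s1 i 3 2 P = 0 \<and>
                   gam c1 c2 s0 s1 i 4 5 P + gam c1 c2 s0 s1 i 5 4 P = 0) \<and>
       - ccoef c1 c2 s0 s1 3 2 P + gam c1 c2 s0 s1 3 3 2 P = 0 \<and>
       gam c1 c2 s0 s1 3 4 5 P + gam c1 c2 s0 s1 3 5 4 P = 0 \<and>
       - ccoef c1 c2 s0 s1 4 5 P + gam c1 c2 s0 s1 4 4 5 P = 0 \<and>
       gam c1 c2 s0 s1 4 2 3 P + gam c1 c2 s0 s1 4 3 2 P = 0) \<and>
    (\<exists>C. \<forall>P::real^6. P \<in> ball 0 (2*\<delta>) \<and> (P$2)^2 + (P$3)^2 > 0 \<longrightarrow>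
       (let d23 = \<bar>lam c1 c2 s0 s1 2 P - lam c1 c2 s0 s1 3 P\<bar> in
        \<bar>- ccoef c1 c2 s0 s1 2 3 P + gam c1 c2 s0 s1 2 2 3 P\<bar> \<le> C * d23 \<and>
        \<bar>gam c1 c2 s0 s1 2 4 5 P + gam c1 c2 s0 s1 2 5 4 P\<bar> \<le> C * d23 \<and>
        \<bar>- ccoef c1 c2 s0 s1 5 4 P + gam c1 c2 s0 s1 5 5 4 P\<bar> \<le> C * d23 \<and>
        \<bar>gam c1 c2 s0 s1 5 2 3 P + gam c1 c2 s0 s1 5 3 2 P\<bar> \<le> C * d23))"
    proof (rule conjI)
    show "\<forall>P::real^6. P \<in> ball 0 (2*\<delta>) \<and> (P$2)^2 + (P$3)^2 > 0 \<longrightarrow>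
       (\<forall>i\<in>{1,6}. gam c1 c2 s0 s1 i 2 3 P + gam c1 c2 s0 s1 i 3 2 P = 0 \<and>
                   gam c1 c2 s0 s1 i 4 5 P + gam c1 c2 s0 s1 i 5 4 P = 0) \<and>
       - ccoef c1 c2 s0 s1 3 2 P + gam c1 c2 s0 s1 3 3 2 P = 0 \<and>
       gam c1 c2 s0 s1 3 4 5 P + gam c1 c2 s0 s1 3 5 4 P = 0 \<and>
       - ccoef c1 c2 s0 s1 4 5 P + gam c1 c2 s0 s1 4 4 5 P = 0 \<and>
       gam c1 c2 s0 s1 4 2 3 P + gam c1 c2 s0 s1 4 3 2 P = 0"
    proof (intro allI impI)
      fix P :: "real^6" assume P: "P \<in> ball 0 (2*\<delta>) \<and> (P$2)^2 + (P$3)^2 > 0"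
      have rg: "\<bar>P$1\<bar> < e" "\<bar>P$2\<bar> < e" "\<bar>P$3\<bar> < e" using reg[of P \<delta>] P d by auto
      have rho: "(P$2)^2 + (P$3)^2 > 0" using P by blast
      note R = region[OF assms(1,2) s0 s1 e1 e2 e3 rg rho]
      show "(\<forall>i\<in>{1,6}. gam c1 c2 s0 s1 i 2 3 P + gam c1 c2 s0 s1 i 3 2 P = 0 \<and>
                   gam c1 c2 s0 s1 i 4 5 P + gam c1 c2 s0 s1 i 5 4 P = 0) \<and>
       - ccoef c1 c2 s0 s1 3 2 P + gam c1 c2 s0 s1 3 3 2 P = 0 \<and>
       gam c1 c2 s0 s1 3 4 5 P + gam c1 c2 s0 s1 3 5 4 P = 0 \<and>
       - ccoef c1 c2 s0 s1 4 5 P + gam c1 c2 s0 s1 4 4 5 P = 0 \<and>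
       gam c1 c2 s0 s1 4 2 3 P + gam c1 c2 s0 s1 4 3 2 P = 0"
        by (rule pointwise(1)[OF s1 R(1-3) rho])
    qed
    show "\<exists>C. \<forall>P::real^6. P \<in> ball 0 (2*\<delta>) \<and> (P$2)^2 + (P$3)^2 > 0 \<longrightarrow>
       (let d23 = \<bar>lam c1 c2 s0 s1 2 P - lam c1 c2 s0 s1 3 P\<bar> in
        \<bar>- ccoef c1 c2 s0 s1 2 3 P + gam c1 c2 s0 s1 2 2 3 P\<bar> \<le> C * d23 \<and>
        \<bar>gam c1 c2 s0 s1 2 4 5 P + gam c1 c2 s0 s1 2 5 4 P\<bar> \<le> C * d23 \<and>
        \<bar>- ccoef c1 c2 s0 s1 5 4 P + gam c1 c2 s0 s1 5 5 4 P\<bar> \<le> C * d23 \<and>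
        \<bar>gam c1 c2 s0 s1 5 2 3 P + gam c1 c2 s0 s1 5 3 2 P\<bar> \<le> C * d23)"
    proof (intro exI[of _ C] allI impI)
      fix P :: "real^6" assume P: "P \<in> ball 0 (2*\<delta>) \<and> (P$2)^2 + (P$3)^2 > 0"
      have rg: "\<bar>P$1\<bar> < e" "\<bar>P$2\<bar> < e" "\<bar>P$3\<bar> < e" using reg[of P \<delta>] P d by auto
      have rho: "(P$2)^2 + (P$3)^2 > 0" using P by blast
      note R = region[OF assms(1,2) s0 s1 e1 e2 e3 rg rho]
      define m where "m = lam c1 c2 s0 s1 2 P"
      define l where "l = lam c1 c2 s0 s1 3 P"
      define E where "E = (l^2 - m^2)/(2*m) + m - l"
      note PW = pointwise[OF s1 R(1-3) rho, folded m_def l_def, folded E_def]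
      note G = Gbound[OF R(4-7)[folded m_def l_def] assms(2), folded E_def C_def]
      have fin: "\<bar>(m - l) * g\<bar> \<le> C * \<bar>m - l\<bar>" if "\<bar>g\<bar> \<le> C" for g
        using that by (simp add: abs_mult mult.commute mult_right_mono)
      show "let d23 = \<bar>lam c1 c2 s0 s1 2 P - lam c1 c2 s0 s1 3 P\<bar> in
        \<bar>- ccoef c1 c2 s0 s1 2 3 P + gam c1 c2 s0 s1 2 2 3 P\<bar> \<le> C * d23 \<and>
        \<bar>gam c1 c2 s0 s1 2 4 5 P + gam c1 c2 s0 s1 2 5 4 P\<bar> \<le> C * d23 \<and>
        \<bar>- ccoef c1 c2 s0 s1 5 4 P + gam c1 c2 s0 s1 5 5 4 P\<bar> \<le> C * d23 \<and>
        \<bar>gam c1 c2 s0 s1 5 2 3 P + gam c1 c2 s0 s1 5 3 2 P\<bar> \<le> C * d23"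
        unfolding Let_def m_def[symmetric] l_def[symmetric] PW(2-5)
        using fin G by blast
    qed
  qed
qed
  qed
qed

end
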